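(* Any quantum algorithm that estimates the non-linearity $\eta(f)$ of a given Boolean function $f$ (given as an oracle) to within additive accuracy $\lambda$ uses $\Omega(1/\lambda)$ queries.
   Context: For $f:\{0,1\}^n\to\{0,1\}$, the Walsh–Hadamard coefficient at $a$ is $\hat f(a)=\frac{1}{2^n}\sum_{x}(-1)^{f(x)\oplus a\cdot x}$, $\hat f_{max}=\max_a|\hat f(a)|$, and the non-linearity is $\eta(f)=\frac12-\frac12\hat f_{max}$. The lower bound is for bounded-error algorithms that must succeed on every $f$; queries are calls to the oracle for $f$. *)

theory Defs
  imports Complex_Main
begin

text \<open>A Boolean function on n bits is modelled as f :: nat => bool, where only the
values on inputs x < 2^n (identified with bit strings via their binary expansion)
matter.\<close>

definition dotp :: "nat \<Rightarrow> nat \<Rightarrow> nat \<Rightarrow> bool" where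
  "dotp n a x = odd (card {i. i < n \<and> bit a i \<and> bit x i})"

definition walsh :: "nat \<Rightarrow> (nat \<Rightarrow> bool) \<Rightarrow> nat \<Rightarrow> real" where
  "walsh n f a = (1 / 2 ^ n) * (\<Sum>x<2^n. (if f x \<noteq> dotp n a x then -1 else 1))"

definition walsh_max :: "nat \<Rightarrow> (nat \<Rightarrow> bool) \<Rightarrow> real" where
  "walsh_max n f = Max ((\<lambda>a. \<bar>walsh n f a\<bar>) ` {..<2^n})"

definition nonlinearity :: "nat \<Rightarrow> (nat \<Rightarrow> bool) \<Rightarrow> real" where
  "nonlinearity n f = 1/2 - 1/2 * walsh_max n f"

text \<open>Computational basis states: (x, b, w) with x < 2^n the query register,
b the answer qubit, w < m the workspace.  Operators are matrices indexed by basis states.\<close>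

type_synonym qbasis = "nat \<times> bool \<times> nat"
type_synonym qstate = "qbasis \<Rightarrow> complex"
type_synonym qop = "qbasis \<Rightarrow> qbasis \<Rightarrow> complex"

definition basis_set :: "nat \<Rightarrow> nat \<Rightarrow> qbasis set" where
  "basis_set n m = {..<2^n} \<times> UNIV \<times> {..<m}"

definition apply_op :: "nat \<Rightarrow> nat \<Rightarrow> qop \<Rightarrow> qstate \<Rightarrow> qstate" where
  "apply_op n m U \<psi> = (\<lambda>i. if i \<in> basis_set n m then (\<Sum>j\<in>basis_set n m. U i j * \<psi> j) else 0)"

definition unitary_on :: "qbasis set \<Rightarrow> qop \<Rightarrow> bool" where
  "unitary_on S U \<longleftrightarrow>
     (\<forall>i\<in>S. \<forall>j\<in>S. (\<Sum>k\<in>S. cnj (U k i) * U k j) = (if i = j then 1 else 0))"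

definition query_op :: "(nat \<Rightarrow> bool) \<Rightarrow> qop" where
  "query_op f = (\<lambda>(x, b, w) (x', b', w'). if x = x' \<and> w = w' \<and> b = (b' \<noteq> f x') then 1 else 0)"

definition init_state :: qstate where
  "init_state = (\<lambda>i. if i = (0, False, 0) then 1 else 0)"

fun run :: "nat \<Rightarrow> nat \<Rightarrow> (nat \<Rightarrow> qop) \<Rightarrow> (nat \<Rightarrow> bool) \<Rightarrow> nat \<Rightarrow> qstate" where
  "run n m Us f 0 = apply_op n m (Us 0) init_state"
| "run n m Us f (Suc k) = apply_op n m (Us (Suc k)) (apply_op n m (query_op f) (run n m Us f k))"

definition success_prob ::
  "nat \<Rightarrow> nat \<Rightarrow> (nat \<Rightarrow> qop) \<Rightarrow> (qbasis \<Rightarrow> real) \<Rightarrow> (nat \<Rightarrow> bool) \<Rightarrow> nat \<Rightarrow> real \<Rightarrow> real \<Rightarrow> real" where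
  "success_prob n m Us out f T target lam =
     (\<Sum>s\<in>basis_set n m. if \<bar>out s - target\<bar> \<le> lam then (cmod (run n m Us f T s))^2 else 0)"

end

theory Submission
  imports Defs
begin

lemma flip_lt:
  fixes x :: nat
  assumes "x < 2^n" "i < n"
  shows "flip_bit i x < 2^n"
proof -
  have "take_bit n (flip_bit i x) = flip_bit i (take_bit n x)"
    using assms by (simp add: take_bit_flip_bit_eq)
  also have "take_bit n x = x" using assms take_bit_nat_eq_self_iff by blast
  finally show ?thesis using take_bit_nat_eq_self_iff by metis
qed

lemma flip_flip: "flip_bit i (flip_bit i (x::nat)) = x"
  by (rule bit_eqI) (auto simp: bit_flip_bit_iff)

lemma bit_flip_nat: "bit (flip_bit i (x::nat)) j = (if j = i then \<not> bit x j else bit x j)"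
  by (auto simp: bit_flip_bit_iff possible_bit_def)

lemma dotp_flip:
  assumes "i < n" "bit a i"
  shows "dotp n a (flip_bit i x) = (\<not> dotp n a x)"
proof -
  let ?A = "{j. j < n \<and> bit a j \<and> bit x j}"
  let ?B = "{j. j < n \<and> bit a j \<and> bit (flip_bit i x) j}"
  have fin: "finite ?A" by simp
  show ?thesis
  proof (cases "bit x i")
    case True
    have "?B = ?A - {i}" using True by (auto simp only: bit_flip_nat mem_Collect_eq Diff_iff singleton_iff split: if_splits)
    moreover have "i \<in> ?A" using True assms by simp
    ultimately have h: "card ?A = Suc (card ?B)"
      using card_Suc_Diff1[OF fin] by simp
    show ?thesis unfolding dotp_def h by simp
  next
    case False
    have "?B = insert i ?A" using assms False by (auto simp only: bit_flip_nat mem_Collect_eq insert_iff split: if_splits)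
    moreover have "i \<notin> ?A" using False by simp
    ultimately have h: "card ?B = Suc (card ?A)" using fin by simp
    show ?thesis unfolding dotp_def h by simp
  qed
qed

lemma nonzero_bit:
  fixes a :: nat
  assumes "a < 2^n" "a \<noteq> 0"
  shows "\<exists>i<n. bit a i"
proof (rule ccontr)
  assume "\<not> ?thesis"
  then have "\<And>i. \<not> bit a i"
    using assms(1) by (metis bit_take_bit_iff take_bit_nat_eq_self_iff)
  then have "a = 0" by (simp add: bit_eq_iff)
  with assms show False by simp
qed

lemma char_sum:
  assumes "a < 2^n" "a \<noteq> 0"
  shows "(\<Sum>x<2^n. (if dotp n a x then -1 else 1::real)) = 0"
proof -
  obtain i where i: "i < n" "bit a i" using nonzero_bit assms by blast
  let ?c = "\<lambda>x. (if dotp n a x then -1 else 1::real)"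
  have bij: "bij_betw (flip_bit i) {..<(2::nat)^n} {..<2^n}"
    by (rule bij_betw_byWitness[where f'="flip_bit i"]) (auto simp: flip_flip flip_lt i)
  have "(\<Sum>x<2^n. ?c x) = (\<Sum>x<2^n. ?c (flip_bit i x))"
    using sum.reindex_bij_betw[OF bij, of ?c] by simp
  also have "\<dots> = (\<Sum>x<2^n. - ?c x)"
    by (rule sum.cong) (auto simp: dotp_flip i)
  finally show ?thesis by (simp add: sum_negf)
qed

lemma dotp_0: "dotp n 0 x = False"
  by (simp add: dotp_def)

lemma count_if:
  fixes A :: "'a set"
  assumes "finite A"
  shows "(\<Sum>x\<in>A. (if P x then 1 else 0::real)) = real (card {x\<in>A. P x})"
  using sum.inter_filter[OF assms, of "\<lambda>_. 1::real" P] by simp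

lemma walsh_0:
  "walsh n f 0 = 1 - 2 * real (card {x. x < 2^n \<and> f x}) / 2^n"
proof -
  have "(\<Sum>x<(2::nat)^n. (if f x \<noteq> dotp n 0 x then -1 else 1::real))
        = (\<Sum>x<(2::nat)^n. 1 - 2 * (if f x then 1 else 0))"
    by (rule sum.cong) (auto simp: dotp_0)
  also have "\<dots> = 2^n - 2 * (\<Sum>x<(2::nat)^n. (if f x then 1 else 0::real))"
    by (simp add: sum_subtractf sum_distrib_left)
  also have "(\<Sum>x<(2::nat)^n. (if f x then 1 else 0::real)) = real (card {x. x < 2^n \<and> f x})"
    using count_if[of "{..<(2::nat)^n}" f] by simp
  finally show ?thesis unfolding walsh_def by (simp add: field_simps)
qed

lemma walsh_other:
  assumes "a < 2^n" "a \<noteq> 0"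
  shows "\<bar>walsh n f a\<bar> \<le> 2 * real (card {x. x < 2^n \<and> f x}) / 2^n"
proof -
  let ?c = "\<lambda>x. (if dotp n a x then -1 else 1::real)"
  let ?F = "{x. x < (2::nat)^n \<and> f x}"
  have "(\<Sum>x<(2::nat)^n. (if f x \<noteq> dotp n a x then -1 else 1::real))
        = (\<Sum>x<(2::nat)^n. ?c x - 2 * (if f x then ?c x else 0))"
    by (rule sum.cong) auto
  also have "\<dots> = (\<Sum>x<(2::nat)^n. ?c x) - 2 * (\<Sum>x<(2::nat)^n. (if f x then ?c x else 0))"
    by (simp add: sum_subtractf sum_distrib_left)
  also have "(\<Sum>x<(2::nat)^n. ?c x) = 0" using char_sum assms by blast
  also have "(\<Sum>x<(2::nat)^n. (if f x then ?c x else 0)) = (\<Sum>x\<in>?F. ?c x)"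
    using sum.inter_filter[of "{..<(2::nat)^n}" ?c f] by (simp add: lessThan_def)
  finally have eq: "(\<Sum>x<(2::nat)^n. (if f x \<noteq> dotp n a x then -1 else 1::real)) = - 2 * (\<Sum>x\<in>?F. ?c x)"
    by simp
  have "\<bar>\<Sum>x\<in>?F. ?c x\<bar> \<le> (\<Sum>x\<in>?F. \<bar>?c x\<bar>)" by (rule sum_abs)
  also have "\<dots> = (\<Sum>x\<in>?F. 1)" by (rule sum.cong) auto
  also have "\<dots> = real (card ?F)" by simp
  finally have "\<bar>\<Sum>x\<in>?F. ?c x\<bar> \<le> real (card ?F)" .
  then show ?thesis unfolding walsh_def eq by (simp add: abs_mult field_simps)
qed

lemma nonlin_weight:
  assumes "4 * card {x. x < 2^n \<and> f x} \<le> 2^n"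
  shows "nonlinearity n f = real (card {x. x < 2^n \<and> f x}) / 2^n"
proof -
  let ?K = "real (card {x. x < 2^n \<and> f x})"
  have K: "4 * ?K \<le> 2^n" using assms
    by (metis (mono_tags, lifting) of_nat_le_iff of_nat_mult of_nat_numeral of_nat_power)
  have w0: "\<bar>walsh n f 0\<bar> = 1 - 2 * ?K / 2^n"
    unfolding walsh_0 using K by (simp add: field_simps)
  have le: "\<bar>walsh n f a\<bar> \<le> 1 - 2 * ?K / 2^n" if "a < 2^n" for a
  proof (cases "a = 0")
    case True then show ?thesis using w0 by simp
  next
    case False
    then have "\<bar>walsh n f a\<bar> \<le> 2 * ?K / 2^n" using walsh_other that by blast
    also have "\<dots> \<le> 1 - 2 * ?K / 2^n" using K by (simp add: field_simps)
    finally show ?thesis .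
  qed
  have "walsh_max n f = 1 - 2 * ?K / 2^n"
    unfolding walsh_max_def
  proof (rule Max_eqI)
    show "finite ((\<lambda>a. \<bar>walsh n f a\<bar>) ` {..<2 ^ n})" by simp
    show "\<And>y. y \<in> (\<lambda>a. \<bar>walsh n f a\<bar>) ` {..<2 ^ n} \<Longrightarrow> y \<le> 1 - 2 * ?K / 2^n"
      using le by auto
    show "1 - 2 * ?K / 2^n \<in> (\<lambda>a. \<bar>walsh n f a\<bar>) ` {..<2 ^ n}"
      using w0 by (metis image_eqI lessThan_iff zero_less_numeral zero_less_power)
  qed
  then show ?thesis unfolding nonlinearity_def by (simp add: field_simps)
qed
definition ip :: "nat \<Rightarrow> nat \<Rightarrow> qstate \<Rightarrow> qstate \<Rightarrow> complex" where
  "ip n m \<psi> \<phi> = (\<Sum>s\<in>basis_set n m. cnj (\<psi> s) * \<phi> s)"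

definition nrm :: "nat \<Rightarrow> nat \<Rightarrow> qstate \<Rightarrow> real" where
  "nrm n m \<psi> = (\<Sum>s\<in>basis_set n m. (cmod (\<psi> s))^2)"

definition pm :: "nat \<Rightarrow> qstate \<Rightarrow> nat \<Rightarrow> real" where
  "pm m \<psi> x = (\<Sum>b\<in>UNIV. \<Sum>w<m. (cmod (\<psi> (x,b,w)))^2)"

lemma finite_B [simp]: "finite (basis_set n m)"
  unfolding basis_set_def by simp

lemma sum_B:
  "(\<Sum>s\<in>basis_set n m. h s) = (\<Sum>x<2^n. \<Sum>b\<in>UNIV. \<Sum>w<m. h (x,b,w))"
  unfolding basis_set_def
  by (simp add: sum.cartesian_product)

lemma ip_self: "ip n m \<psi> \<psi> = complex_of_real (nrm n m \<psi>)"
  unfolding ip_def nrm_def of_real_sum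
proof (rule sum.cong)
  fix s show "cnj (\<psi> s) * \<psi> s = complex_of_real ((cmod (\<psi> s))\<^sup>2)"
    using complex_norm_square[of "\<psi> s"] by (simp add: mult.commute)
qed simp

lemma nrm_pm: "nrm n m \<psi> = (\<Sum>x<2^n. pm m \<psi> x)"
  unfolding nrm_def pm_def by (rule sum_B)

lemma qcond: "(x = x' \<and> w = w' \<and> b = (b' \<noteq> f x')) = ((x',b',w') = (x, b \<noteq> f x, w))"
  by auto

lemma query_entry0: "query_op f (x,b,w) (x',b',w') = (if (x',b',w') = (x, b \<noteq> f x, w) then 1 else 0)"
  unfolding query_op_def by (simp only: prod.case qcond)

lemma if01: "(if j = c then 1 else 0) * (\<psi> j::complex) = (if j = c then \<psi> j else 0)"
  by simp

lemma query_entry: "query_op f (x,b,w) j * \<psi> j = (if j = (x, b \<noteq> f x, w) then \<psi> j else 0)"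
proof (cases j)
  case (fields x' b' w')
  show ?thesis unfolding fields query_entry0 by (rule if01)
qed

lemma query_apply:
  assumes "(x,b,w) \<in> basis_set n m"
  shows "apply_op n m (query_op f) \<psi> (x,b,w) = \<psi> (x, b \<noteq> f x, w)"
proof -
  have "apply_op n m (query_op f) \<psi> (x,b,w)
      = (\<Sum>j\<in>basis_set n m. query_op f (x,b,w) j * \<psi> j)"
    using assms by (simp add: apply_op_def)
  also have "\<dots> = (\<Sum>j\<in>basis_set n m. (if j = (x, b \<noteq> f x, w) then \<psi> j else 0))"
    by (simp only: query_entry)
  also have "\<dots> = \<psi> (x, b \<noteq> f x, w)"
    using assms by (simp add: sum.delta' basis_set_def)
  finally show ?thesis .
qed
lemma unitary_ip:
  assumes U: "unitary_on (basis_set n m) U"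
  shows "ip n m (apply_op n m U \<psi>) (apply_op n m U \<phi>) = ip n m \<psi> \<phi>"
proof -
  let ?B = "basis_set n m"
  let ?F = "\<lambda>i j k. cnj (\<psi> j) * \<phi> k * (cnj (U i j) * U i k)"
  have "ip n m (apply_op n m U \<psi>) (apply_op n m U \<phi>)
      = (\<Sum>i\<in>?B. cnj (\<Sum>j\<in>?B. U i j * \<psi> j) * (\<Sum>k\<in>?B. U i k * \<phi> k))"
    unfolding ip_def apply_op_def by (rule sum.cong) auto
  also have "\<dots> = (\<Sum>i\<in>?B. \<Sum>j\<in>?B. \<Sum>k\<in>?B. ?F i j k)"
  proof (rule sum.cong[OF refl])
    fix i
    have "cnj (\<Sum>j\<in>?B. U i j * \<psi> j) * (\<Sum>k\<in>?B. U i k * \<phi> k)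
        = (\<Sum>j\<in>?B. cnj (U i j * \<psi> j)) * (\<Sum>k\<in>?B. U i k * \<phi> k)"
      by (simp only: cnj_sum)
    also have "\<dots> = (\<Sum>j\<in>?B. \<Sum>k\<in>?B. cnj (U i j * \<psi> j) * (U i k * \<phi> k))"
      by (rule sum_product)
    also have "\<dots> = (\<Sum>j\<in>?B. \<Sum>k\<in>?B. ?F i j k)"
      by (intro sum.cong refl) (simp add: mult_ac)
    finally show "cnj (\<Sum>j\<in>?B. U i j * \<psi> j) * (\<Sum>k\<in>?B. U i k * \<phi> k) = (\<Sum>j\<in>?B. \<Sum>k\<in>?B. ?F i j k)" .
  qed
  also have "\<dots> = (\<Sum>j\<in>?B. \<Sum>i\<in>?B. \<Sum>k\<in>?B. ?F i j k)"
    by (rule sum.swap)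
  also have "\<dots> = (\<Sum>j\<in>?B. \<Sum>k\<in>?B. \<Sum>i\<in>?B. ?F i j k)"
    by (intro sum.cong refl sum.swap)
  also have "\<dots> = (\<Sum>j\<in>?B. \<Sum>k\<in>?B. cnj (\<psi> j) * \<phi> k * (\<Sum>i\<in>?B. cnj (U i j) * U i k))"
    by (intro sum.cong refl) (simp only: sum_distrib_left)
  also have "\<dots> = (\<Sum>j\<in>?B. \<Sum>k\<in>?B. (if k = j then cnj (\<psi> j) * \<phi> k else 0))"
    using U unfolding unitary_on_def by (intro sum.cong refl) auto
  also have "\<dots> = (\<Sum>j\<in>?B. cnj (\<psi> j) * \<phi> j)"
    by (intro sum.cong refl) (simp add: sum.delta')
  finally show ?thesis unfolding ip_def .
qed
lemma sum_bool: "(\<Sum>b\<in>UNIV. g b) = g False + (g True :: 'a::comm_monoid_add)"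
  by (simp add: UNIV_bool add.commute)

lemma bool_shift:
  fixes h :: "bool \<Rightarrow> 'a::comm_monoid_add" and c :: bool
  shows "(\<Sum>b\<in>UNIV. h (b \<noteq> c)) = (\<Sum>b\<in>UNIV. h b)"
  unfolding sum_bool[of "\<lambda>b. h (b \<noteq> c)"] sum_bool[of h] by (cases c) (simp_all add: add.commute)

lemma amgm: "cmod (cnj a * b) \<le> ((cmod a)^2 + (cmod b)^2)/2"
proof -
  have "0 \<le> (cmod a - cmod b)^2" by simp
  then show ?thesis by (simp add: norm_mult power2_diff field_simps)
qed

lemma E_zero:
  fixes p q :: "bool \<Rightarrow> nat \<Rightarrow> complex"
  shows "(\<Sum>b\<in>UNIV. \<Sum>w<m. cnj (p (b\<noteq>c) w) * q (b\<noteq>c) w - cnj (p b w) * q b w) = 0"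
proof -
  let ?H = "\<lambda>b. \<Sum>w<m. cnj (p b w) * q b w"
  have "(\<Sum>b\<in>UNIV. \<Sum>w<m. cnj (p (b\<noteq>c) w) * q (b\<noteq>c) w - cnj (p b w) * q b w)
      = (\<Sum>b\<in>UNIV. ?H (b \<noteq> c)) - (\<Sum>b\<in>UNIV. ?H b)"
    by (simp add: sum_subtractf)
  also have "\<dots> = 0" using bool_shift[of ?H c] by simp
  finally show ?thesis .
qed

lemma E_bound:
  fixes p q :: "bool \<Rightarrow> nat \<Rightarrow> complex"
  shows "cmod (\<Sum>b\<in>UNIV. \<Sum>w<m. cnj (p (b\<noteq>c) w) * q (b\<noteq>d) w - cnj (p b w) * q b w)
     \<le> (\<Sum>b\<in>UNIV. \<Sum>w<m. (cmod (p b w))^2) + (\<Sum>b\<in>UNIV. \<Sum>w<m. (cmod (q b w))^2)"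
proof -
  let ?P = "\<lambda>b. \<Sum>w<m. (cmod (p b w))^2"
  let ?Q = "\<lambda>b. \<Sum>w<m. (cmod (q b w))^2"
  have "cmod (\<Sum>b\<in>UNIV. \<Sum>w<m. cnj (p (b\<noteq>c) w) * q (b\<noteq>d) w - cnj (p b w) * q b w)
      \<le> (\<Sum>b\<in>UNIV. cmod (\<Sum>w<m. cnj (p (b\<noteq>c) w) * q (b\<noteq>d) w - cnj (p b w) * q b w))"
    by (rule norm_sum)
  also have "\<dots> \<le> (\<Sum>b\<in>UNIV. \<Sum>w<m. cmod (cnj (p (b\<noteq>c) w) * q (b\<noteq>d) w - cnj (p b w) * q b w))"
    by (intro sum_mono norm_sum)
  also have "\<dots> \<le> (\<Sum>b\<in>UNIV. \<Sum>w<m. ((cmod (p (b\<noteq>c) w))^2 + (cmod (q (b\<noteq>d) w))^2)/2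
                                        + ((cmod (p b w))^2 + (cmod (q b w))^2)/2)"
  proof (intro sum_mono)
    fix b w
    have "cmod (cnj (p (b\<noteq>c) w) * q (b\<noteq>d) w - cnj (p b w) * q b w)
        \<le> cmod (cnj (p (b\<noteq>c) w) * q (b\<noteq>d) w) + cmod (cnj (p b w) * q b w)"
      by (rule norm_triangle_ineq4)
    also have "\<dots> \<le> ((cmod (p (b\<noteq>c) w))^2 + (cmod (q (b\<noteq>d) w))^2)/2
                                        + ((cmod (p b w))^2 + (cmod (q b w))^2)/2"
      by (intro add_mono amgm)
    finally show "cmod (cnj (p (b\<noteq>c) w) * q (b\<noteq>d) w - cnj (p b w) * q b w)
        \<le> ((cmod (p (b\<noteq>c) w))^2 + (cmod (q (b\<noteq>d) w))^2)/2
                                        + ((cmod (p b w))^2 + (cmod (q b w))^2)/2" .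
  qed
  also have "\<dots> = ((\<Sum>b\<in>UNIV. ?P (b\<noteq>c)) + (\<Sum>b\<in>UNIV. ?Q (b\<noteq>d)) + (\<Sum>b\<in>UNIV. ?P b) + (\<Sum>b\<in>UNIV. ?Q b)) / 2"
    by (simp add: sum.distrib sum_divide_distrib add_divide_distrib)
  also have "\<dots> = (\<Sum>b\<in>UNIV. ?P b) + (\<Sum>b\<in>UNIV. ?Q b)"
    using bool_shift[of ?P c] bool_shift[of ?Q d] by simp
  finally show ?thesis .
qed
lemma in_B: "x < 2^n \<Longrightarrow> w < m \<Longrightarrow> (x,b,w) \<in> basis_set n m"
  by (simp add: basis_set_def)

lemma query_step:
  "cmod (ip n m (apply_op n m (query_op f) \<psi>) (apply_op n m (query_op g) \<phi>) - ip n m \<psi> \<phi>)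
     \<le> (\<Sum>x\<in>{x. x < 2^n \<and> f x \<noteq> g x}. pm m \<psi> x + pm m \<phi> x)"
proof -
  define E where "E x = (\<Sum>b\<in>UNIV. \<Sum>w<m. cnj (\<psi> (x, b\<noteq>f x, w)) * \<phi> (x, b\<noteq>g x, w) - cnj (\<psi> (x,b,w)) * \<phi> (x,b,w))" for x
  have "ip n m (apply_op n m (query_op f) \<psi>) (apply_op n m (query_op g) \<phi>)
      = (\<Sum>x<2^n. \<Sum>b\<in>UNIV. \<Sum>w<m. cnj (\<psi> (x, b\<noteq>f x, w)) * \<phi> (x, b\<noteq>g x, w))"
    unfolding ip_def sum_B
    by (intro sum.cong refl) (simp add: query_apply in_B)
  moreover have "ip n m \<psi> \<phi> = (\<Sum>x<2^n. \<Sum>b\<in>UNIV. \<Sum>w<m. cnj (\<psi> (x,b,w)) * \<phi> (x,b,w))"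
    unfolding ip_def sum_B ..
  ultimately have eq: "ip n m (apply_op n m (query_op f) \<psi>) (apply_op n m (query_op g) \<phi>) - ip n m \<psi> \<phi>
      = (\<Sum>x<2^n. E x)"
    unfolding E_def by (simp add: sum_subtractf)
  have bnd: "cmod (E x) \<le> (if f x \<noteq> g x then pm m \<psi> x + pm m \<phi> x else 0)" for x
  proof (cases "f x = g x")
    case True
    have "E x = 0"
      unfolding E_def True
      using E_zero[where p="\<lambda>b w. \<psi> (x,b,w)" and c="g x" and m=m and q="\<lambda>b w. \<phi> (x,b,w)"] by simp
    then show ?thesis using True by simp
  next
    case False
    have "cmod (E x) \<le> pm m \<psi> x + pm m \<phi> x"
      unfolding E_def pm_def
      using E_bound[where p="\<lambda>b w. \<psi> (x,b,w)" and c="f x" and q="\<lambda>b w. \<phi> (x,b,w)" and d="g x" and m=m] by simp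
    then show ?thesis using False by simp
  qed
  have "cmod (\<Sum>x<2^n. E x) \<le> (\<Sum>x<2^n. cmod (E x))" by (rule norm_sum)
  also have "\<dots> \<le> (\<Sum>x<2^n. (if f x \<noteq> g x then pm m \<psi> x + pm m \<phi> x else 0))"
    by (intro sum_mono bnd)
  also have "\<dots> = (\<Sum>x\<in>{x. x < 2^n \<and> f x \<noteq> g x}. pm m \<psi> x + pm m \<phi> x)"
    using sum.inter_filter[of "{..<(2::nat)^n}" "\<lambda>x. pm m \<psi> x + pm m \<phi> x" "\<lambda>x. f x \<noteq> g x"]
    by (simp add: lessThan_def)
  finally show ?thesis unfolding eq .
qed
lemma pm_nonneg: "0 \<le> pm m \<psi> x"
  unfolding pm_def by (intro sum_nonneg) simp

lemma query_ip: "ip n m (apply_op n m (query_op f) \<psi>) (apply_op n m (query_op f) \<phi>) = ip n m \<psi> \<phi>"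
  using query_step[of n m f \<psi> f \<phi>] by simp

lemma ip_init: "m \<ge> 1 \<Longrightarrow> ip n m init_state init_state = 1"
  unfolding ip_def init_state_def
  by (simp add: if_distrib sum.delta' basis_set_def cong: if_cong)

lemma run_ip:
  assumes U: "\<forall>k\<le>T. unitary_on (basis_set n m) (Us k)" and m: "m \<ge> 1"
  shows "t \<le> T \<Longrightarrow> ip n m (run n m Us f t) (run n m Us f t) = 1"
proof (induction t)
  case 0
  then show ?case using U unitary_ip ip_init m by simp
next
  case (Suc t)
  then show ?case using U unitary_ip query_ip by simp
qed

lemma run_nrm:
  assumes U: "\<forall>k\<le>T. unitary_on (basis_set n m) (Us k)" and m: "m \<ge> 1" and t: "t \<le> T"
  shows "nrm n m (run n m Us f t) = 1"
  using run_ip[OF U m t, of f] ip_self by (metis of_real_eq_1_iff)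

lemma prod_bound: 
  assumes "\<beta> > 0"
  shows "x * y \<le> (\<beta> * x^2 + y^2 / \<beta>) / (2::real)"
proof -
  have "0 \<le> (\<beta> * x - y)^2 / \<beta>" using assms by simp
  also have "(\<beta> * x - y)^2 / \<beta> = \<beta> * x^2 - 2 * x * y + y^2 / \<beta>"
    using assms by (simp add: power2_diff field_simps power2_eq_square)
  finally show ?thesis by simp
qed

lemma lin_sum: "(\<Sum>s\<in>A. (\<alpha> * P s + Q s / \<beta>) / 2) = (\<alpha> * sum P A + sum Q A / \<beta>) / (2::real)"
  by (simp add: sum.distrib sum_distrib_left sum_divide_distrib add_divide_distrib)

lemma arith17:
  fixes c a a' b b' :: real
  assumes "c \<le> (2/3*a + b/(2/3))/2 + (3/2*a' + b'/(3/2))/2" "a + a' = 1" "b + b' = 1" "2/3 \<le> a" "2/3 \<le> b'"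
  shows "c \<le> 17/18"
proof -
  have e: "b/(2/3) = 3/2*b" "b'/(3/2) = 2/3*b'" by simp_all
  have "c \<le> (2/3*a + 3/2*b)/2 + (3/2*a' + 2/3*b')/2" using assms(1) unfolding e .
  then show ?thesis using assms(2-5) by (simp add: field_simps)
qed

lemma final_bound:
  assumes n1: "nrm n m \<psi> = 1" and n2: "nrm n m \<phi> = 1" and A: "A \<subseteq> basis_set n m"
    and a: "(\<Sum>s\<in>A. (cmod (\<psi> s))^2) \<ge> 2/3"
    and b: "(\<Sum>s\<in>basis_set n m - A. (cmod (\<phi> s))^2) \<ge> 2/3"
  shows "cmod (ip n m \<psi> \<phi>) \<le> 17/18"
proof -
  let ?B = "basis_set n m"
  let ?g = "\<lambda>s. if s \<in> A then ((2/3) * (cmod (\<psi> s))^2 + (cmod (\<phi> s))^2 / (2/3)) / 2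
                else ((3/2) * (cmod (\<psi> s))^2 + (cmod (\<phi> s))^2 / (3/2)) / (2::real)"
  have "cmod (ip n m \<psi> \<phi>) \<le> (\<Sum>s\<in>?B. cmod (cnj (\<psi> s) * \<phi> s))"
    unfolding ip_def by (rule norm_sum)
  also have "\<dots> \<le> (\<Sum>s\<in>?B. ?g s)"
  proof (intro sum_mono)
    fix s
    have e: "cmod (cnj (\<psi> s) * \<phi> s) = cmod (\<psi> s) * cmod (\<phi> s)" by (simp add: norm_mult)
    show "cmod (cnj (\<psi> s) * \<phi> s) \<le> ?g s"
      unfolding e using prod_bound[of "2/3" "cmod (\<psi> s)" "cmod (\<phi> s)"]
        prod_bound[of "3/2" "cmod (\<psi> s)" "cmod (\<phi> s)"] by simp
  qed
  also have "\<dots> = (\<Sum>s\<in>A. ((2/3) * (cmod (\<psi> s))^2 + (cmod (\<phi> s))^2 / (2/3)) / 2)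
               + (\<Sum>s\<in>?B - A. ((3/2) * (cmod (\<psi> s))^2 + (cmod (\<phi> s))^2 / (3/2)) / 2)"
  proof -
    have i1: "?B \<inter> {s. s \<in> A} = A" using A by auto
    have i2: "?B \<inter> - {s. s \<in> A} = ?B - A" by auto
    have "(\<Sum>s\<in>?B. ?g s) = (\<Sum>s\<in>?B \<inter> {s. s \<in> A}. ((2/3) * (cmod (\<psi> s))^2 + (cmod (\<phi> s))^2 / (2/3)) / 2)
               + (\<Sum>s\<in>?B \<inter> - {s. s \<in> A}. ((3/2) * (cmod (\<psi> s))^2 + (cmod (\<phi> s))^2 / (3/2)) / 2)"
      by (rule sum.If_cases) simp
    then show ?thesis unfolding i1 i2 .
  qed
  also have "\<dots> = ((2/3) * (\<Sum>s\<in>A. (cmod (\<psi> s))^2) + (\<Sum>s\<in>A. (cmod (\<phi> s))^2) / (2/3)) / 2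
               + ((3/2) * (\<Sum>s\<in>?B - A. (cmod (\<psi> s))^2) + (\<Sum>s\<in>?B - A. (cmod (\<phi> s))^2) / (3/2)) / 2"
    by (simp only: lin_sum)
  finally have main: "cmod (ip n m \<psi> \<phi>) \<le> ((2/3) * (\<Sum>s\<in>A. (cmod (\<psi> s))^2) + (\<Sum>s\<in>A. (cmod (\<phi> s))^2) / (2/3)) / 2
               + ((3/2) * (\<Sum>s\<in>?B - A. (cmod (\<psi> s))^2) + (\<Sum>s\<in>?B - A. (cmod (\<phi> s))^2) / (3/2)) / 2" .
  have s1: "(\<Sum>s\<in>A. (cmod (\<psi> s))^2) + (\<Sum>s\<in>?B - A. (cmod (\<psi> s))^2) = 1"
    using n1 sum.subset_diff[OF A finite_B, of "\<lambda>s. (cmod (\<psi> s))^2"] unfolding nrm_def by simp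
  have s2: "(\<Sum>s\<in>A. (cmod (\<phi> s))^2) + (\<Sum>s\<in>?B - A. (cmod (\<phi> s))^2) = 1"
    using n2 sum.subset_diff[OF A finite_B, of "\<lambda>s. (cmod (\<phi> s))^2"] unfolding nrm_def by simp
  show ?thesis using arith17[OF main s1 s2 a b] .
qed
definition fS :: "nat \<Rightarrow> nat set \<Rightarrow> nat \<Rightarrow> bool" where
  "fS M S x = (x mod M \<in> S)"

lemma card_block:
  fixes M L :: nat
  assumes M: "0 < M" and S: "S \<subseteq> {..<M}"
  shows "card {x. x < M*L \<and> x mod M \<in> S} = card S * L"
proof -
  have "bij_betw (\<lambda>(a,b). a + M*b) (S \<times> {..<L}) {x. x < M*L \<and> x mod M \<in> S}"
  proof (rule bij_betw_byWitness[where f'="\<lambda>x. (x mod M, x div M)"])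
    show "\<forall>p\<in>S \<times> {..<L}. (\<lambda>x. (x mod M, x div M)) ((\<lambda>(a,b). a + M*b) p) = p"
      using S M by auto
    show "\<forall>x\<in>{x. x < M*L \<and> x mod M \<in> S}. (\<lambda>(a,b). a + M*b) ((\<lambda>x. (x mod M, x div M)) x) = x"
      by simp
    show "(\<lambda>(a,b). a + M*b) ` (S \<times> {..<L}) \<subseteq> {x. x < M*L \<and> x mod M \<in> S}"
    proof clarify
      fix a b assume ab: "a \<in> S" "b < L"
      then have "a < M" using S by auto
      have "a + M*b < M + M*b" using \<open>a < M\<close> by simp
      also have "\<dots> = M * (b+1)" by simp
      also have "\<dots> \<le> M * L" using ab by (intro mult_le_mono2) simp
      finally show "a + M*b < M*L \<and> (a + M*b) mod M \<in> S" using \<open>a < M\<close> ab by simp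
    qed
    show "(\<lambda>x. (x mod M, x div M)) ` {x. x < M*L \<and> x mod M \<in> S} \<subseteq> S \<times> {..<L}"
      using M by (auto simp: div_less_iff_less_mult mult.commute)
  qed
  then have "card {x. x < M*L \<and> x mod M \<in> S} = card (S \<times> {..<L})"
    by (simp add: bij_betw_same_card)
  also have "\<dots> = card S * L" by (simp add: card_cartesian_product)
  finally show ?thesis .
qed

lemma nonlin_fS:
  assumes r: "r \<le> n" and S: "S \<subseteq> {..<2^r}" and k: "4 * card S \<le> 2^r"
  shows "nonlinearity n (fS (2^r) S) = real (card S) / 2^r"
proof -
  have n: "(2::nat)^n = 2^r * 2^(n-r)" using r by (simp flip: power_add)
  have c: "card {x. x < 2^n \<and> fS (2^r) S x} = card S * 2^(n-r)"
    unfolding fS_def n using card_block[OF _ S, of "2^(n-r)"] by simp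
  have "4 * (card S * 2^(n-r)) \<le> 2^r * 2^(n-r)"
    using mult_le_mono1[OF k, of "2^(n-r)"] by (simp add: mult.assoc)
  then have "4 * card {x. x < 2^n \<and> fS (2^r) S x} \<le> 2^n"
    unfolding c using n by simp
  then have "nonlinearity n (fS (2^r) S) = real (card S * 2^(n-r)) / 2^n"
    using nonlin_weight c by metis
  also have "\<dots> = real (card S) / 2^r"
  proof -
    have nr: "(2::real)^n = 2^r * 2^(n-r)" using r by (simp flip: power_add)
    show ?thesis unfolding nr by simp
  qed
  finally show ?thesis .
qed

lemma diff_set:
  "z \<notin> S \<Longrightarrow> {x. x < 2^n \<and> fS M S x \<noteq> fS M (insert z S) x} = {x. x < 2^n \<and> x mod M = z}"
  unfolding fS_def by auto

lemma block_sum: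
  fixes h :: "nat \<Rightarrow> real"
  assumes "0 < M"
  shows "(\<Sum>z<M. \<Sum>x\<in>{x. x < 2^n \<and> x mod M = z}. h x) = (\<Sum>x<2^n. h x)"
proof -
  have "(\<Sum>z<M. \<Sum>x\<in>{x. x \<in> {..<(2::nat)^n} \<and> x mod M = z}. h x) = (\<Sum>x<2^n. h x)"
    by (rule sum.group) (use assms in auto)
  then show ?thesis by simp
qed
lemma run_step:
  assumes U: "\<forall>k\<le>T. unitary_on (basis_set n m) (Us k)" and t: "Suc t \<le> T"
  shows "cmod (ip n m (run n m Us f t) (run n m Us g t))
           - (\<Sum>x\<in>{x. x < 2^n \<and> f x \<noteq> g x}. pm m (run n m Us f t) x + pm m (run n m Us g t) x)
         \<le> cmod (ip n m (run n m Us f (Suc t)) (run n m Us g (Suc t)))"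
proof -
  let ?a = "ip n m (run n m Us f t) (run n m Us g t)"
  let ?b = "ip n m (apply_op n m (query_op f) (run n m Us f t)) (apply_op n m (query_op g) (run n m Us g t))"
  have e: "ip n m (run n m Us f (Suc t)) (run n m Us g (Suc t)) = ?b"
    using U t unitary_ip by simp
  have "cmod ?a \<le> cmod ?b + cmod (?b - ?a)"
    by (metis add.commute diff_add_cancel norm_triangle_ineq4 norm_minus_commute norm_diff_ineq
        add_diff_cancel_left' norm_triangle_ineq2)
  moreover have "cmod (?b - ?a) \<le> (\<Sum>x\<in>{x. x < 2^n \<and> f x \<noteq> g x}. pm m (run n m Us f t) x + pm m (run n m Us g t) x)"
    by (rule query_step)
  ultimately show ?thesis unfolding e by linarith
qed

lemma success_eq:
  "success_prob n m Us out f T eta lam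
     = (\<Sum>s\<in>{s\<in>basis_set n m. \<bar>out s - eta\<bar> \<le> lam}. (cmod (run n m Us f T s))^2)"
  unfolding success_prob_def
  by (rule sum.inter_filter[OF finite_B, symmetric])

lemma pair_final:
  assumes U: "\<forall>k\<le>T. unitary_on (basis_set n m) (Us k)" and m: "m \<ge> 1"
    and succ: "\<forall>f. success_prob n m Us out f T (nonlinearity n f) lam \<ge> 2/3"
    and ef: "nonlinearity n f = e1" and eg: "nonlinearity n g = e2" and gap: "2 * lam < \<bar>e1 - e2\<bar>"
  shows "cmod (ip n m (run n m Us f T) (run n m Us g T)) \<le> 17/18"
proof -
  let ?B = "basis_set n m"
  let ?A = "{s\<in>?B. \<bar>out s - e1\<bar> \<le> lam}"
  let ?A' = "{s\<in>?B. \<bar>out s - e2\<bar> \<le> lam}"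
  have a: "(\<Sum>s\<in>?A. (cmod (run n m Us f T s))^2) \<ge> 2/3"
    using succ[rule_format, of f] unfolding ef success_eq .
  have a': "(\<Sum>s\<in>?A'. (cmod (run n m Us g T s))^2) \<ge> 2/3"
    using succ[rule_format, of g] unfolding eg success_eq .
  have sub: "?A' \<subseteq> ?B - ?A"
  proof
    fix s assume s: "s \<in> ?A'"
    have "\<not> \<bar>out s - e1\<bar> \<le> lam"
    proof
      assume "\<bar>out s - e1\<bar> \<le> lam"
      with s have "\<bar>e1 - e2\<bar> \<le> 2 * lam" by auto
      with gap show False by simp
    qed
    with s show "s \<in> ?B - ?A" by simp
  qed
  have "(\<Sum>s\<in>?A'. (cmod (run n m Us g T s))^2) \<le> (\<Sum>s\<in>?B - ?A. (cmod (run n m Us g T s))^2)"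
    by (rule sum_mono2) (use sub in auto)
  with a' have b: "(\<Sum>s\<in>?B - ?A. (cmod (run n m Us g T s))^2) \<ge> 2/3" by linarith
  show ?thesis
    by (rule final_bound[OF run_nrm[OF U m order.refl] run_nrm[OF U m order.refl] _ a b]) auto
qed
lemma adversary:
  fixes lam :: real
  assumes r: "r \<le> n" and k: "4 * (k+1) \<le> (2::nat)^r" and lamM: "2 * lam < 1 / 2^r"
    and m: "m \<ge> 1" and U: "\<forall>k\<le>T. unitary_on (basis_set n m) (Us k)"
    and succ: "\<forall>f. success_prob n m Us out f T (nonlinearity n f) lam \<ge> 2/3"
  shows "1/18 \<le> real T * (1 / real (2^r - k) + 1 / real (k+1))"
proof -
  define M :: nat where "M = 2^r"
  have M0: "0 < M" unfolding M_def by simp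
  have kM: "4 * (k+1) \<le> M" using k unfolding M_def .
  define X where "X = {S. S \<subseteq> {..<M} \<and> card S = k}"
  define Y where "Y = {S. S \<subseteq> {..<M} \<and> card S = Suc k}"
  define R where "R = Sigma X (\<lambda>S. {..<M} - S)"
  define st where "st S t = run n m Us (fS M S) t" for S t
  define W where "W t = (\<Sum>p\<in>R. cmod (ip n m (st (fst p) t) (st (insert (snd p) (fst p)) t)))" for t
  define Qm where "Qm S t z = (\<Sum>x\<in>{x. x < 2^n \<and> x mod M = z}. pm m (st S t) x)" for S t z
  have finX: "finite X" unfolding X_def
    by (rule finite_subset[of _ "Pow {..<M}"]) auto
  have finY: "finite Y" unfolding Y_def
    by (rule finite_subset[of _ "Pow {..<M}"]) auto
  have finR: "finite R" unfolding R_def using finX by auto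
  have finSY: "finite (Sigma Y (\<lambda>S. S))"
    by (rule finite_subset[of _ "Y \<times> {..<M}"]) (use finY in \<open>auto simp: Y_def\<close>)
  have cR1: "card R = card X * (M - k)"
  proof -
    have "card R = (\<Sum>S\<in>X. card ({..<M} - S))" unfolding R_def using finX by simp
    also have "\<dots> = (\<Sum>S\<in>X. M - k)"
      by (rule sum.cong) (auto simp: X_def card_Diff_subset finite_subset)
    finally show ?thesis by simp
  qed
  have bij: "bij_betw (\<lambda>(S,z). (insert z S, z)) R (Sigma Y (\<lambda>S. S))"
  proof (rule bij_betw_byWitness[where f'="\<lambda>(S,z). (S - {z}, z)"])
    show "\<forall>p\<in>R. (\<lambda>(S,z). (S - {z}, z)) ((\<lambda>(S,z). (insert z S, z)) p) = p"
      unfolding R_def by auto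
    show "\<forall>p\<in>Sigma Y (\<lambda>S. S). (\<lambda>(S,z). (insert z S, z)) ((\<lambda>(S,z). (S - {z}, z)) p) = p"
      by auto
    show "(\<lambda>(S,z). (insert z S, z)) ` R \<subseteq> Sigma Y (\<lambda>S. S)"
    proof (rule image_subsetI)
      fix p assume "p \<in> R"
      then obtain S z where p: "p = (S,z)" and S: "S \<subseteq> {..<M}" "card S = k" "z < M" "z \<notin> S"
        unfolding R_def X_def by auto
      then have "finite S" by (meson finite_lessThan finite_subset)
      then show "(\<lambda>(S,z). (insert z S, z)) p \<in> Sigma Y (\<lambda>S. S)" using S unfolding p Y_def by auto
    qed
    show "(\<lambda>(S,z). (S - {z}, z)) ` Sigma Y (\<lambda>S. S) \<subseteq> R"
    proof (rule image_subsetI)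
      fix p assume "p \<in> Sigma Y (\<lambda>S. S)"
      then obtain S z where p: "p = (S,z)" and S: "S \<subseteq> {..<M}" "card S = Suc k" "z \<in> S"
        unfolding Y_def by auto
      then have "finite S" by (meson finite_lessThan finite_subset)
      then show "(\<lambda>(S,z). (S - {z}, z)) p \<in> R" using S unfolding p R_def X_def by auto
    qed
  qed
  have cR2: "card R = card Y * (k+1)"
  proof -
    have "card R = card (Sigma Y (\<lambda>S. S))" using bij by (rule bij_betw_same_card)
    also have "\<dots> = (\<Sum>S\<in>Y. card S)" using finY finSY unfolding Y_def
      by (subst card_SigmaI) (auto intro: finite_subset)
    also have "\<dots> = (\<Sum>S\<in>Y. k+1)" by (rule sum.cong) (auto simp: Y_def)
    finally show ?thesis by simp
  qed
  have Xne: "{..<k} \<in> X" unfolding X_def using kM by auto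
  have cXpos: "card X > 0" using Xne finX card_gt_0_iff by blast
  have Mk: "M - k > 0" using kM by simp
  have cRpos: "card R > 0" using cR1 cXpos Mk by simp
  have nrm1: "t \<le> T \<Longrightarrow> (\<Sum>z<M. Qm S t z) = 1" for S t
  proof -
    assume t: "t \<le> T"
    have "(\<Sum>z<M. Qm S t z) = (\<Sum>x<2^n. pm m (st S t) x)"
      unfolding Qm_def using block_sum[OF M0] by simp
    also have "\<dots> = 1" using run_nrm[OF U m t] nrm_pm unfolding st_def by metis
    finally show ?thesis .
  qed
  have Qnn: "0 \<le> Qm S t z" for S t z unfolding Qm_def by (intro sum_nonneg pm_nonneg)
  have step: "W t - (real (card X) + real (card Y)) \<le> W (Suc t)" if t: "Suc t \<le> T" for t
  proof -
    have pstep: "cmod (ip n m (st S t) (st (insert z S) t)) - (Qm S t z + Qm (insert z S) t z)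
        \<le> cmod (ip n m (st S (Suc t)) (st (insert z S) (Suc t)))" if "(S,z) \<in> R" for S z
    proof -
      have "z \<notin> S" using that unfolding R_def by auto
      then show ?thesis
        using run_step[OF U t, of "fS M S" "fS M (insert z S)"]
        unfolding st_def Qm_def diff_set[OF \<open>z \<notin> S\<close>] by (simp add: sum.distrib)
    qed
    have s1: "(\<Sum>p\<in>R. Qm (fst p) t (snd p)) \<le> real (card X)"
    proof -
      have "(\<Sum>p\<in>R. Qm (fst p) t (snd p)) = (\<Sum>S\<in>X. \<Sum>z\<in>{..<M} - S. Qm S t z)"
        unfolding R_def using finX by (simp add: sum.Sigma split_def)
      also have "\<dots> \<le> (\<Sum>S\<in>X. \<Sum>z<M. Qm S t z)"
        by (intro sum_mono sum_mono2) (auto simp: Qnn)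
      also have "\<dots> = (\<Sum>S\<in>X. 1)" using nrm1 t by simp
      finally show ?thesis by simp
    qed
    have s2: "(\<Sum>p\<in>R. Qm (insert (snd p) (fst p)) t (snd p)) \<le> real (card Y)"
    proof -
      have "(\<Sum>p\<in>R. Qm (insert (snd p) (fst p)) t (snd p)) = (\<Sum>p\<in>Sigma Y (\<lambda>S. S). Qm (fst p) t (snd p))"
        using sum.reindex_bij_betw[OF bij, of "\<lambda>p. Qm (fst p) t (snd p)"]
        by (simp add: split_def)
      also have "\<dots> = (\<Sum>S\<in>Y. \<Sum>z\<in>S. Qm S t z)"
        using finY unfolding Y_def by (subst sum.Sigma) (auto simp: split_def intro: finite_subset)
      also have "\<dots> \<le> (\<Sum>S\<in>Y. \<Sum>z<M. Qm S t z)"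
        by (intro sum_mono sum_mono2) (auto simp: Qnn Y_def)
      also have "\<dots> = (\<Sum>S\<in>Y. 1)" using nrm1 t by simp
      finally show ?thesis by simp
    qed
    have "W t - (\<Sum>p\<in>R. Qm (fst p) t (snd p)) - (\<Sum>p\<in>R. Qm (insert (snd p) (fst p)) t (snd p))
        = (\<Sum>p\<in>R. cmod (ip n m (st (fst p) t) (st (insert (snd p) (fst p)) t))
             - (Qm (fst p) t (snd p) + Qm (insert (snd p) (fst p)) t (snd p)))"
      unfolding W_def by (simp add: sum_subtractf sum.distrib)
    also have "\<dots> \<le> W (Suc t)"
      unfolding W_def by (rule sum_mono) (use pstep in auto)
    finally show ?thesis using s1 s2 by linarith
  qed
  have W0: "W 0 = real (card R)"
  proof -
    have "cmod (ip n m (st S 0) (st S' 0)) = 1" for S S'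
    proof -
      have "st S' 0 = st S 0" unfolding st_def by simp
      then show ?thesis using run_ip[OF U m, of 0] unfolding st_def by simp
    qed
    then show ?thesis unfolding W_def by simp
  qed
  have Wind: "t \<le> T \<Longrightarrow> real (card R) - real t * (real (card X) + real (card Y)) \<le> W t" for t
  proof (induction t)
    case 0 then show ?case using W0 by simp
  next
    case (Suc t)
    then have "real (card R) - real t * (real (card X) + real (card Y)) \<le> W t" by simp
    moreover have "W t - (real (card X) + real (card Y)) \<le> W (Suc t)" using step Suc.prems by blast
    ultimately show ?case by (simp add: algebra_simps)
  qed
  have WT: "W T \<le> 17/18 * real (card R)"
  proof -
    have "W T \<le> (\<Sum>p\<in>R. 17/18)"
      unfolding W_def
    proof (rule sum_mono)
      fix p assume "p \<in> R"
      then obtain S z where p: "p = (S,z)" and S: "S \<subseteq> {..<M}" "card S = k" "z < M" "z \<notin> S"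
        unfolding R_def X_def by auto
      have finS: "finite S" using S by (meson finite_lessThan finite_subset)
      have e1: "nonlinearity n (fS M S) = real k / M"
        using nonlin_fS[OF r, of S] S kM unfolding M_def by simp
      have e2: "nonlinearity n (fS M (insert z S)) = real (k+1) / M"
        using nonlin_fS[OF r, of "insert z S"] S kM finS unfolding M_def by simp
      have gap: "2 * lam < \<bar>real k / M - real (k+1) / M\<bar>"
        using lamM M0 unfolding M_def by (simp add: field_simps)
      show "cmod (ip n m (st (fst p) T) (st (insert (snd p) (fst p)) T)) \<le> 17/18"
        unfolding p st_def using pair_final[OF U m succ e1 e2 gap] by simp
    qed
    then show ?thesis by simp
  qed
  have main: "real (card R) / 18 \<le> real T * (real (card X) + real (card Y))"
    using Wind[OF order.refl] WT by linarith
  have cX: "real (card X) = real (card R) / real (M - k)" using cR1 Mk by (simp add: field_simps)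
  have cY: "real (card Y) = real (card R) / real (k+1)" using cR2 by (simp add: field_simps)
  have "real (card R) * (1/18) \<le> real (card R) * (real T * (1 / real (M - k) + 1 / real (k+1)))"
    using main unfolding cX cY by (simp add: field_simps)
  then have "1/18 \<le> real T * (1 / real (M - k) + 1 / real (k+1))"
    using cRpos by (subst (asm) mult_le_cancel_left_pos) simp_all
  then show ?thesis unfolding M_def .
qed
lemma pow2_bracket_aux:
  fixes y :: real
  shows "1 \<le> y \<Longrightarrow> y < 2^j \<Longrightarrow> \<exists>r. 2^r \<le> y \<and> y < 2^(r+1)"
proof (induction j)
  case 0 then show ?case by simp
next
  case (Suc j)
  show ?case
  proof (cases "y < 2^j")
    case True then show ?thesis using Suc by blast
  next
    case False then show ?thesis using Suc.prems by (intro exI[of _ j]) simp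
  qed
qed

lemma pow2_bracket:
  fixes y :: real
  assumes "1 \<le> y"
  shows "\<exists>r. 2^r \<le> y \<and> y < 2^(r+1)"
proof -
  obtain j where "y < 2^j" using real_arch_pow[of 2 y] by auto
  then show ?thesis using pow2_bracket_aux assms by blast
qed

lemma inv_le: "0 < b \<Longrightarrow> b \<le> a \<Longrightarrow> 1/a \<le> 1/(b::real)"
  by (simp add: frac_le)

lemma helper36: "0 < b \<Longrightarrow> 1/18 \<le> t * (2/b) \<Longrightarrow> b \<le> 36 * (t::real)"
  by (simp add: field_simps)

theorem lemma6:
  shows "\<exists>c > 0. \<exists>lam0 > 0. \<forall>lam. 0 < lam \<and> lam < lam0 \<longrightarrow>
     (\<exists>N. \<forall>n \<ge> N. \<forall>m \<ge> 1. \<forall>T. \<forall>(Us :: nat \<Rightarrow> qop). \<forall>(out :: qbasis \<Rightarrow> real).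
        (\<forall>k \<le> T. unitary_on (basis_set n m) (Us k)) \<and>
        (\<forall>f. success_prob n m Us out f T (nonlinearity n f) lam \<ge> 2/3)
        \<longrightarrow> real T \<ge> c / lam)"
proof (rule exI[of _ "1/1152"], rule conjI, simp, rule exI[of _ "1/16"], rule conjI, simp, intro allI impI)
  fix lam :: real
  assume lam: "0 < lam \<and> lam < 1/16"
  then have "1 \<le> 1 / (4 * lam)" by (simp add: field_simps)
  then obtain r :: nat where r1: "2^r \<le> 1 / (4 * lam)" and r2: "1 / (4 * lam) < 2^(r+1)"
    using pow2_bracket by blast
  have "(4::real) < 1 / (4 * lam)" using lam by (simp add: field_simps)
  then have "(4::real) < 2^(r+1)" using r2 by linarith
  then have "(2::real)^2 < 2^(r+1)" by simp
  then have "2 < r + 1" by (simp only: power_strict_increasing_iff one_less_numeral_iff semiring_norm)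
  then have r2': "2 \<le> r" by simp
  define k :: nat where "k = 2^(r-2) - 1"
  have pk: "(2::nat)^(r-2) \<ge> 1" by simp
  have kk: "k + 1 = 2^(r-2)" unfolding k_def using pk by simp
  have pr: "(2::nat)^r = 4 * 2^(r-2)" using r2'
    by (metis add_diff_inverse_nat not_less power_add power2_eq_square numeral_Bit0 mult_2 numeral_One one_add_one)
  have k4: "4 * (k+1) \<le> (2::nat)^r" using kk pr by simp
  have lamM: "2 * lam < 1 / 2^r"
  proof -
    have "4 * lam \<le> 1 / 2^r" using r1 lam by (simp add: field_simps)
    then show ?thesis using lam by linarith
  qed
  show "\<exists>N. \<forall>n \<ge> N. \<forall>m \<ge> 1. \<forall>T. \<forall>(Us :: nat \<Rightarrow> qop). \<forall>(out :: qbasis \<Rightarrow> real).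
        (\<forall>k \<le> T. unitary_on (basis_set n m) (Us k)) \<and>
        (\<forall>f. success_prob n m Us out f T (nonlinearity n f) lam \<ge> 2/3)
        \<longrightarrow> real T \<ge> 1/1152 / lam"
  proof (intro exI[of _ r] allI impI)
    fix n m T Us out
    assume n: "r \<le> n" and m: "1 \<le> m"
      and H: "(\<forall>k \<le> T. unitary_on (basis_set n m) (Us k)) \<and>
        (\<forall>f. success_prob n m Us out f T (nonlinearity n f) lam \<ge> 2/3)"
    have adv: "1/18 \<le> real T * (1 / real (2^r - k) + 1 / real (k+1))"
      using adversary[OF n k4 lamM m] H by blast
    have "k+1 \<le> 2^r - k" using k4 by simp
    then have kle: "real (k+1) \<le> real (2^r - k)" by (simp only: of_nat_le_iff)
    then have "1 / real (2^r - k) \<le> 1 / real (k+1)"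
      using inv_le[OF _ kle] by (metis of_nat_0_less_iff zero_less_Suc Suc_eq_plus1)
    then have "real T * (1 / real (2^r - k) + 1 / real (k+1)) \<le> real T * (2 / real (k+1))"
      by (intro mult_left_mono) simp_all
    from order.trans[OF adv this] have "1/18 \<le> real T * (2 / real (k+1))" .
    then have T1: "real (k+1) \<le> 36 * real T"
      by (rule helper36[rotated]) (metis of_nat_0_less_iff zero_less_Suc Suc_eq_plus1)
    have "4 * (k+1) = (2::nat)^r" using kk pr by simp
    then have "4 * real (k+1) = 2^r" by (metis of_nat_mult of_nat_numeral of_nat_power)
    then have "real (k+1) = 2^r / 4" by simp
    moreover have "1 / (8 * lam) < 2^r" using r2 lam by (simp add: field_simps)
    ultimately have "1 / (32 * lam) < real (k+1)" by (simp add: field_simps)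
    with T1 have "1 / (32 * lam) < 36 * real T" by linarith
    then show "real T \<ge> 1/1152 / lam" using lam by (simp add: field_simps)
  qed
qed

end
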